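(* Let $a\in\mathbb{R}$, $b\in(a,\infty)$, $h\in\mathbb{N}$, $v_1,\dots,v_h,w_1,\dots,w_h\in(0,\infty)$, let $f,p\in C(\mathbb{R},\mathbb{R})$ satisfy for all $x\in\mathbb{R}$ that $p(x)\ge0$ and $p^{-1}((0,\infty))=(a,b)$, with $\mathcal{L}$, $I_i^\theta$, $\operatorname{Lip}$ as in the context. Assume $\operatorname{Lip}(f)<\min_{i\in\{1,\dots,h\}}v_iw_i$, let $\theta\in\mathbb{R}^{h+1}$ satisfy $(\nabla\mathcal{L})(\theta)=0$, and let $i,j\in\{1,\dots,h\}$ satisfy $I_i^\theta\cap I_j^\theta\neq\emptyset$. Then $I_i^\theta\subseteq I_j^\theta$ or $I_j^\theta\subseteq I_i^\theta$.
   Context: Let $\mathfrak{c}(x)=\min\{\max\{x,0\},1\}$. For $F\in C(\mathbb{R},\mathbb{R})$ let $\operatorname{Lip}(F)=\sup_{x,y\in[a,b],x\ne y}\frac{|F(x)-F(y)|}{|x-y|}$. For $\theta=(\theta_1,\dots,\theta_{h+1})\in\mathbb{R}^{h+1}$ and $i\in\{1,\dots,h\}$ let $\psi_i(\theta)=-[w_i]^{-1}\theta_i$, $I_i^\theta=(\psi_i(\theta),\psi_i(\theta)+[w_i]^{-1})\cap(a,b)$, $\mathcal{N}^\theta(x)=\theta_{h+1}+\sum_{i=1}^hv_i\mathfrak{c}(w_ix+\theta_i)$, and $\mathcal{L}(\theta)=\int_a^b(\mathcal{N}^\theta(x)-f(x))^2p(x)\,\mathrm{d}x$ ($\mathcal{L}$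 is continuously differentiable). *)

theory Defs
  imports "HOL-Analysis.Analysis"
begin

definition clip :: "real \<Rightarrow> real" where
  "clip x = min (max x 0) 1"

definition Lip :: "(real \<Rightarrow> real) \<Rightarrow> real \<Rightarrow> real \<Rightarrow> ereal" where
  "Lip F a b = (SUP xy \<in> {(x, y). x \<in> {a..b} \<and> y \<in> {a..b} \<and> x \<noteq> y}.
      ereal (\<bar>F (fst xy) - F (snd xy)\<bar> / \<bar>fst xy - snd xy\<bar>))"

text \<open>Parameters theta are vectors indexed by 1..h+1, represented as nat => real.\<close>
definition psi :: "(nat \<Rightarrow> real) \<Rightarrow> (nat \<Rightarrow> real) \<Rightarrow> nat \<Rightarrow> real" where
  "psi w \<theta> i = - (1 / w i) * \<theta> i"

definition Ival :: "real \<Rightarrow> real \<Rightarrow> (nat \<Rightarrow> real) \<Rightarrow> (nat \<Rightarrow> real) \<Rightarrow> nat \<Rightarrow> real set" where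
  "Ival a b w \<theta> i = {psi w \<theta> i <..< psi w \<theta> i + 1 / w i} \<inter> {a<..<b}"

definition NN :: "nat \<Rightarrow> (nat \<Rightarrow> real) \<Rightarrow> (nat \<Rightarrow> real) \<Rightarrow> (nat \<Rightarrow> real) \<Rightarrow> real \<Rightarrow> real" where
  "NN h v w \<theta> x = \<theta> (h + 1) + (\<Sum>i = 1..h. v i * clip (w i * x + \<theta> i))"

definition Loss :: "real \<Rightarrow> real \<Rightarrow> nat \<Rightarrow> (nat \<Rightarrow> real) \<Rightarrow> (nat \<Rightarrow> real)
    \<Rightarrow> (real \<Rightarrow> real) \<Rightarrow> (real \<Rightarrow> real) \<Rightarrow> (nat \<Rightarrow> real) \<Rightarrow> real" where
  "Loss a b h v w f p \<theta> = integral {a..b} (\<lambda>x. (NN h v w \<theta> x - f x)\<^sup>2 * p x)"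

definition grad_zero :: "nat \<Rightarrow> ((nat \<Rightarrow> real) \<Rightarrow> real) \<Rightarrow> (nat \<Rightarrow> real) \<Rightarrow> bool" where
  "grad_zero h L \<theta> = (\<forall>k \<in> {1..h+1}. ((\<lambda>t. L (\<theta>(k := t))) has_real_derivative 0) (at (\<theta> k)))"

end

theory Submission
  imports Defs
begin

lemma clip_cont: "continuous_on UNIV clip"
  unfolding clip_def by (intro continuous_intros)

lemma clip_mono: "u \<le> u' \<Longrightarrow> clip u \<le> clip u'"
  by (auto simp: clip_def)

lemma clip_bounds: "0 \<le> clip u" "clip u \<le> 1"
  by (auto simp: clip_def)

lemma clip_id: "0 \<le> u \<Longrightarrow> u \<le> 1 \<Longrightarrow> clip u = u"
  by (auto simp: clip_def)

lemma clip_lip: "\<bar>clip (u + s) - clip u\<bar> \<le> \<bar>s\<bar>"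
  by (auto simp: clip_def min_def max_def)

lemma clip_diff1: "\<bar>clip x - clip y\<bar> \<le> 1"
  using clip_bounds[of x] clip_bounds[of y] by auto

lemma NN_cont: "continuous_on UNIV (NN h v w \<theta>)"
proof -
  have "continuous_on UNIV (\<lambda>x. \<theta> (h + 1) + (\<Sum>i = 1..h. v i * clip (w i * x + \<theta> i)))"
    by (intro continuous_intros continuous_on_compose2[OF clip_cont]) auto
  then show ?thesis unfolding NN_def[abs_def] by simp
qed

lemma NN_update:
  assumes "k \<in> {1..h}"
  shows "NN h v w (\<theta>(k := t)) x = NN h v w \<theta> x + v k * (clip (w k * x + t) - clip (w k * x + \<theta> k))"
proof -
  have "(\<Sum>i = 1..h. v i * clip (w i * x + (\<theta>(k := t)) i)) =
        (\<Sum>i = 1..h. v i * clip (w i * x + \<theta> i) + (if i = k then v k * (clip (w k * x + t) - clip (w k * x + \<theta> k)) else 0))"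
    by (intro sum.cong) (auto simp: algebra_simps)
  also have "\<dots> = (\<Sum>i = 1..h. v i * clip (w i * x + \<theta> i)) + v k * (clip (w k * x + t) - clip (w k * x + \<theta> k))"
    using assms by (simp add: sum.distrib)
  finally show ?thesis using assms unfolding NN_def by simp
qed

lemma Ival_eq:
  "Ival a b w \<theta> k = {max a (psi w \<theta> k) <..< min b (psi w \<theta> k + 1 / w k)}"
  unfolding Ival_def by auto

lemma pos_integral:
  fixes G :: "real \<Rightarrow> real"
  assumes "c < d" "continuous_on UNIV G" "\<forall>x\<in>{c..d}. G x \<ge> 0" "\<forall>x\<in>{c<..<d}. G x > 0"
  shows "integral {c..d} G > 0"
proof -
  have ci: "continuous_on {c..d} G" using assms(2) by (rule continuous_on_subset) auto
  have "G integrable_on {c..d}" using ci integrable_continuous_interval by blast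
  have ge: "integral {c..d} G \<ge> 0"
    by (rule integral_nonneg) (use \<open>G integrable_on {c..d}\<close> assms(3) in auto)
  show ?thesis
  proof (rule ccontr)
    assume "\<not> ?thesis"
    then have "integral {c..d} G = 0" using ge by auto
    then have hi: "(G has_integral 0) (cbox c d)"
      using \<open>G integrable_on {c..d}\<close> by (metis cbox_interval has_integral_integral)
    have "G ((c+d)/2) = 0"
      by (rule has_integral_0_cbox_imp_0[OF _ _ hi]) (use ci assms in \<open>auto simp: cbox_interval box_real\<close>)
    moreover have "G ((c+d)/2) > 0" using assms by auto
    ultimately show False by simp
  qed
qed

lemma core:
  fixes g p :: "real \<Rightarrow> real"
  assumes o: "li < lj" "lj < ri" "ri < rj"
    and cg: "continuous_on UNIV g" and cp: "continuous_on UNIV p"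
    and p0: "\<forall>x. p x \<ge> 0" and pp: "\<forall>x\<in>{li<..<rj}. p x > 0"
    and mono: "\<forall>x y. li \<le> x \<longrightarrow> x < y \<longrightarrow> y \<le> rj \<longrightarrow> g x < g y"
    and Ii: "integral {li..ri} (\<lambda>x. g x * p x) = 0"
    and Ij: "integral {lj..rj} (\<lambda>x. g x * p x) = 0"
  shows False
proof -
  define G where "G x = g x * p x" for x
  have cG: "continuous_on UNIV G" unfolding G_def[abs_def] by (intro continuous_intros cg cp)
  have cmG: "continuous_on UNIV (\<lambda>x. - G x)" by (intro continuous_intros cG)
  have intG: "G integrable_on {c..d}" for c d
    using continuous_on_subset[OF cG] integrable_continuous_interval by blast
  have Ii': "integral {li..ri} G = 0" and Ij': "integral {lj..rj} G = 0"
    using Ii Ij unfolding G_def by auto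
  show False
  proof (cases "g lj \<ge> 0")
    case True
    have "integral {lj..rj} G > 0"
    proof (rule pos_integral[OF _ cG])
      show "\<forall>x\<in>{lj..rj}. 0 \<le> G x"
      proof
        fix x assume x: "x \<in> {lj..rj}"
        have "g x \<ge> 0" using True mono[rule_format, of lj x] o x by (cases "x = lj") auto
        then show "0 \<le> G x" using p0 unfolding G_def by simp
      qed
      show "\<forall>x\<in>{lj<..<rj}. 0 < G x"
      proof
        fix x assume x: "x \<in> {lj<..<rj}"
        have "g x > 0" using True mono[rule_format, of lj x] o x by auto
        then show "0 < G x" using pp o x unfolding G_def by simp
      qed
    qed (use o in auto)
    then show False using Ij' by simp
  next
    case False
    note F1 = False
    show False
    proof (cases "g ri \<le> 0")
      case True
      have "integral {li..ri} (\<lambda>x. - G x) > 0"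
      proof (rule pos_integral[OF _ cmG])
        show "\<forall>x\<in>{li..ri}. 0 \<le> - G x"
        proof
          fix x assume x: "x \<in> {li..ri}"
          have "g x \<le> 0" using True mono[rule_format, of x ri] o x by (cases "x = ri") auto
          then show "0 \<le> - G x" using p0 unfolding G_def by (simp add: mult_nonpos_nonneg)
        qed
        show "\<forall>x\<in>{li<..<ri}. 0 < - G x"
        proof
          fix x assume x: "x \<in> {li<..<ri}"
          have "g x < 0" using True mono[rule_format, of x ri] o x by auto
          then show "0 < - G x" using pp o x unfolding G_def by (simp add: mult_neg_pos)
        qed
      qed (use o in auto)
      then show False using Ii' by (simp add: integral_neg)
    next
      case False
      have A: "integral {li..lj} (\<lambda>x. - G x) > 0"
      proof (rule pos_integral[OF _ cmG])
        show "\<forall>x\<in>{li..lj}. 0 \<le> - G x"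
        proof
          fix x assume x: "x \<in> {li..lj}"
          have "g x \<le> 0" using F1 mono[rule_format, of x lj] o x by (cases "x = lj") auto
          then show "0 \<le> - G x" using p0 unfolding G_def by (simp add: mult_nonpos_nonneg)
        qed
        show "\<forall>x\<in>{li<..<lj}. 0 < - G x"
        proof
          fix x assume x: "x \<in> {li<..<lj}"
          have "g x < 0" using F1 mono[rule_format, of x lj] o x by auto
          then show "0 < - G x" using pp o x unfolding G_def by (simp add: mult_neg_pos)
        qed
      qed (use o in auto)
      have C: "integral {ri..rj} G > 0"
      proof (rule pos_integral[OF _ cG])
        show "\<forall>x\<in>{ri..rj}. 0 \<le> G x"
        proof
          fix x assume x: "x \<in> {ri..rj}"
          have "g x \<ge> 0" using False mono[rule_format, of ri x] o x by (cases "x = ri") auto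
          then show "0 \<le> G x" using p0 unfolding G_def by simp
        qed
        show "\<forall>x\<in>{ri<..<rj}. 0 < G x"
        proof
          fix x assume x: "x \<in> {ri<..<rj}"
          have "g x > 0" using False mono[rule_format, of ri x] o x by auto
          then show "0 < G x" using pp o x unfolding G_def by simp
        qed
      qed (use o in auto)
      have s1: "integral {li..lj} G + integral {lj..ri} G = integral {li..ri} G"
        using Henstock_Kurzweil_Integration.integral_combine[where a=li and c=lj and b=ri and f=G] o intG by auto
      have s2: "integral {lj..ri} G + integral {ri..rj} G = integral {lj..rj} G"
        using Henstock_Kurzweil_Integration.integral_combine[where a=lj and c=ri and b=rj and f=G] o intG by auto
      show False using A C s1 s2 Ii' Ij' by (simp add: integral_neg)
    qed
  qed
qed

lemma Lip_bound:
  assumes "Lip f a b < ereal m" "x \<in> {a..b}" "y \<in> {a..b}" "x < y"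
  shows "f y - f x < m * (y - x)"
proof -
  have "ereal (\<bar>f (fst (x,y)) - f (snd (x,y))\<bar> / \<bar>fst (x,y) - snd (x,y)\<bar>) \<le> Lip f a b"
    unfolding Lip_def by (rule SUP_upper) (use assms in auto)
  then have "ereal (\<bar>f x - f y\<bar> / \<bar>x - y\<bar>) < ereal m" using assms(1) by (simp only: fst_conv snd_conv)
  then have "\<bar>f x - f y\<bar> / \<bar>x - y\<bar> < m" by simp
  then have "\<bar>f x - f y\<bar> < m * (y - x)" using assms(4) by (simp add: field_simps)
  then show ?thesis by linarith
qed

lemma NN_incr:
  assumes k: "k \<in> {1..h}" and vw: "\<forall>k \<in> {1..h}. v k > 0 \<and> w k > 0"
    and L: "Lip f a b < ereal (Min ((\<lambda>k. v k * w k) ` {1..h}))"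
    and xy: "x < y" "x \<in> {a..b}" "y \<in> {a..b}" "psi w \<theta> k \<le> x" "y \<le> psi w \<theta> k + 1 / w k"
  shows "NN h v w \<theta> x - f x < NN h v w \<theta> y - f y"
proof -
  define m where "m = Min ((\<lambda>k. v k * w k) ` {1..h})"
  have mk: "m \<le> v k * w k" unfolding m_def using k by (intro Min_le) auto
  have f: "f y - f x < m * (y - x)" using Lip_bound[OF L[folded m_def] xy(2,3,1)] .
  have wk: "w k > 0" "v k > 0" using vw k by auto
  have ux: "0 \<le> w k * x + \<theta> k" "w k * x + \<theta> k \<le> 1"
   and uy: "0 \<le> w k * y + \<theta> k" "w k * y + \<theta> k \<le> 1"
  proof -
    have 1: "x * w k < y * w k" using xy(1) wk by simp
    have 2: "- \<theta> k \<le> x * w k" "\<theta> k + y * w k \<le> 1"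
      using xy(1,4,5) wk unfolding psi_def by (auto simp: field_simps)
    show "0 \<le> w k * x + \<theta> k" "w k * x + \<theta> k \<le> 1" "0 \<le> w k * y + \<theta> k" "w k * y + \<theta> k \<le> 1"
      using 1 2 by (simp_all add: mult.commute)
  qed
  have "v k * (clip (w k * y + \<theta> k) - clip (w k * x + \<theta> k))
      \<le> (\<Sum>i = 1..h. v i * (clip (w i * y + \<theta> i) - clip (w i * x + \<theta> i)))"
  proof (rule member_le_sum[where f="\<lambda>i. v i * (clip (w i * y + \<theta> i) - clip (w i * x + \<theta> i))", OF k])
    fix i assume i: "i \<in> {1..h} - {k}"
    have "w i * x + \<theta> i \<le> w i * y + \<theta> i" using vw i xy(1) by auto
    then show "0 \<le> v i * (clip (w i * y + \<theta> i) - clip (w i * x + \<theta> i))"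
      using clip_mono vw i by (simp add: less_imp_le)
  qed auto
  also have "\<dots> = NN h v w \<theta> y - NN h v w \<theta> x"
    unfolding NN_def by (simp add: sum_subtractf algebra_simps)
  finally have "v k * w k * (y - x) \<le> NN h v w \<theta> y - NN h v w \<theta> x"
    using clip_id[OF ux] clip_id[OF uy] by (simp add: algebra_simps)
  moreover have "m * (y - x) \<le> v k * w k * (y - x)" using mk xy(1) by (simp add: mult_right_mono)
  ultimately show ?thesis using f by linarith
qed

lemma chi_iff:
  fixes wk x t :: real
  assumes "wk > 0"
  shows "(0 \<le> wk * x + t \<and> wk * x + t < 1) \<longleftrightarrow> (- (1 / wk) * t \<le> x \<and> x < - (1 / wk) * t + 1 / wk)"
proof -
  have e: "- (1 / wk) * t = (- t) / wk" by (simp add: field_simps)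
  have "0 \<le> wk * x + t \<longleftrightarrow> - (1 / wk) * t \<le> x" unfolding e using assms
    by (simp only: pos_divide_le_eq) (auto simp: algebra_simps)
  moreover have "wk * x + t < 1 \<longleftrightarrow> x < - (1 / wk) * t + 1 / wk" using assms by (auto simp: field_simps)
  ultimately show ?thesis by simp
qed

lemma restrict_int:
  fixes G :: "real \<Rightarrow> real"
  assumes wk: "w k > 0" and lr: "max a (psi w \<theta> k) < min b (psi w \<theta> k + 1 / w k)"
    and cG: "continuous_on UNIV G"
  shows "integral {a..b} (\<lambda>x. G x * (if 0 \<le> w k * x + \<theta> k \<and> w k * x + \<theta> k < 1 then 1 else 0))
       = integral {max a (psi w \<theta> k)..min b (psi w \<theta> k + 1 / w k)} G"
proof -
  define l where "l = max a (psi w \<theta> k)"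
  define r where "r = min b (psi w \<theta> k + 1 / w k)"
  have "G integrable_on {l..r}"
    using continuous_on_subset[OF cG] integrable_continuous_interval by blast
  then have "(G has_integral integral {l..r} G) (cbox l r)" by (simp add: cbox_interval has_integral_integral)
  then have "((\<lambda>x. if x \<in> cbox l r then G x else 0) has_integral integral {l..r} G) (cbox a b)"
    by (rule has_integral_restrict_closed_subinterval) (auto simp: cbox_interval l_def r_def)
  then have "((\<lambda>x. G x * (if 0 \<le> w k * x + \<theta> k \<and> w k * x + \<theta> k < 1 then 1 else 0)) has_integral integral {l..r} G) (cbox a b)"
  proof (rule has_integral_spike[OF negligible_sing[of r], rotated])
    fix x assume x: "x \<in> cbox a b - {r}"
    show "G x * (if 0 \<le> w k * x + \<theta> k \<and> w k * x + \<theta> k < 1 then 1 else 0) = (if x \<in> cbox l r then G x else 0)"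
      using x lr unfolding chi_iff[OF wk] cbox_interval l_def r_def psi_def by auto
  qed
  then show ?thesis unfolding l_def r_def cbox_interval by (rule integral_unique)
qed

lemma partial_zero:
  assumes k: "k \<in> {1..h}" and ab: "a < b"
    and cf: "continuous_on UNIV f" and cp: "continuous_on UNIV p"
    and p0: "\<forall>x. p x \<ge> 0"
    and d: "((\<lambda>t. Loss a b h v w f p (\<theta>(k := t))) has_real_derivative 0) (at (\<theta> k))"
  shows "integral {a..b} (\<lambda>x. 2 * v k * ((NN h v w \<theta> x - f x) * p x * (if 0 \<le> w k * x + \<theta> k \<and> w k * x + \<theta> k < 1 then 1 else 0))) = 0"
proof -
  define g where "g x = NN h v w \<theta> x - f x" for x
  define ch where "ch x = (if 0 \<le> w k * x + \<theta> k \<and> w k * x + \<theta> k < 1 then 1 else 0::real)" for x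
  define \<Delta> where "\<Delta> s x = clip (w k * x + \<theta> k + s) - clip (w k * x + \<theta> k)" for s x
  define q where "q s x = (1/s) * ((2 * v k * g x * \<Delta> s x + (v k)^2 * (\<Delta> s x)^2) * p x)" for s x
  define F where "F t = Loss a b h v w f p (\<theta>(k := t))" for t
  have cg: "continuous_on UNIV g" unfolding g_def[abs_def] by (intro continuous_intros NN_cont cf)
  have cD: "continuous_on UNIV (\<Delta> s)" for s unfolding \<Delta>_def[abs_def]
    by (intro continuous_intros continuous_on_compose2[OF clip_cont]) auto
  have eqF: "F (\<theta> k + s) - F (\<theta> k) = integral {a..b} (\<lambda>x. (2 * v k * g x * \<Delta> s x + (v k)^2 * (\<Delta> s x)^2) * p x)" for s
  proof -
    have "F (\<theta> k + s) = integral {a..b} (\<lambda>x. (g x + v k * \<Delta> s x)^2 * p x)"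
      unfolding F_def Loss_def NN_update[OF k] g_def \<Delta>_def by (simp add: algebra_simps)
    moreover have "F (\<theta> k) = integral {a..b} (\<lambda>x. (g x)^2 * p x)"
      unfolding F_def Loss_def g_def by simp
    moreover have "integral {a..b} (\<lambda>x. (g x + v k * \<Delta> s x)^2 * p x) - integral {a..b} (\<lambda>x. (g x)^2 * p x)
       = integral {a..b} (\<lambda>x. (g x + v k * \<Delta> s x)^2 * p x - (g x)^2 * p x)"
    proof (rule integral_diff[symmetric])
      have "continuous_on UNIV (\<lambda>x. (g x + v k * \<Delta> s x)^2 * p x)"
        by (intro continuous_intros cg cD cp)
      then show "(\<lambda>x. (g x + v k * \<Delta> s x)^2 * p x) integrable_on {a..b}"
        by (rule integrable_continuous_interval[OF continuous_on_subset[OF _ subset_UNIV]])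
      have "continuous_on UNIV (\<lambda>x. (g x)^2 * p x)"
        by (intro continuous_intros cg cD cp)
      then show "(\<lambda>x. (g x)^2 * p x) integrable_on {a..b}"
        by (rule integrable_continuous_interval[OF continuous_on_subset[OF _ subset_UNIV]])
    qed
    moreover have "(\<lambda>x. (g x + v k * \<Delta> s x)^2 * p x - (g x)^2 * p x) = (\<lambda>x. (2 * v k * g x * \<Delta> s x + (v k)^2 * (\<Delta> s x)^2) * p x)"
      by (rule ext) (simp add: power2_eq_square algebra_simps)
    ultimately show ?thesis by simp
  qed
  have lim0: "((\<lambda>s. integral {a..b} (q s)) \<longlongrightarrow> 0) (at_right 0)"
  proof -
    from d have "((\<lambda>s. (F (\<theta> k + s) - F (\<theta> k)) / s) \<longlongrightarrow> 0) (at 0)" unfolding F_def DERIV_def .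
    then have "((\<lambda>s. (F (\<theta> k + s) - F (\<theta> k)) / s) \<longlongrightarrow> 0) (at_right 0)"
      by (rule tendsto_mono[rotated]) (simp add: at_le)
    moreover have "(F (\<theta> k + s) - F (\<theta> k)) / s = integral {a..b} (q s)" for s
      unfolding eqF q_def integral_mult_left by simp
    ultimately show ?thesis by simp
  qed
  have ev: "eventually (\<lambda>s. \<Delta> s x = s * ch x) (at_right 0)" for x
  proof -
    define u where "u = w k * x + \<theta> k"
    have Du: "\<Delta> s x = clip (u + s) - clip u" for s unfolding \<Delta>_def u_def by simp
    have chu: "ch x = (if 0 \<le> u \<and> u < 1 then 1 else 0)" unfolding ch_def u_def by simp
    consider "u < 0" | "0 \<le> u \<and> u < 1" | "1 \<le> u" by linarith
    then show ?thesis
    proof cases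
      case 1
      have "eventually (\<lambda>s. s \<in> {0<..<-u}) (at_right 0)" using eventually_at_right_real[of 0 "-u"] 1 by simp
      then show ?thesis by eventually_elim (use 1 in \<open>auto simp: Du chu clip_def\<close>)
    next
      case 2
      have "eventually (\<lambda>s. s \<in> {0<..<1-u}) (at_right 0)" using eventually_at_right_real[of 0 "1-u"] 2 by simp
      then show ?thesis by eventually_elim (use 2 in \<open>auto simp: Du chu clip_def\<close>)
    next
      case 3
      have "eventually (\<lambda>s::real. s \<in> {0<..<1}) (at_right 0)" using eventually_at_right_real[of 0 1] by simp
      then show ?thesis by eventually_elim (use 3 in \<open>auto simp: Du chu clip_def\<close>)
    qed
  qed
  have ptw: "((\<lambda>s. q s x) \<longlongrightarrow> 2 * v k * (g x * p x * ch x)) (at_right 0)" for x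
  proof -
    have E: "eventually (\<lambda>s. q s x = (2 * v k * g x * ch x + (v k)^2 * s * (ch x)^2) * p x) (at_right 0)"
      using ev[of x] eventually_at_right_real[of 0 "1::real", OF zero_less_one]
    proof eventually_elim
      case (elim s)
      then show ?case unfolding q_def by (simp add: field_simps power2_eq_square)
    qed
    have T: "((\<lambda>s. (2 * v k * g x * ch x + (v k)^2 * s * (ch x)^2) * p x) \<longlongrightarrow>
        (2 * v k * g x * ch x + (v k)^2 * 0 * (ch x)^2) * p x) (at_right 0)"
      by (intro tendsto_intros)
    then have "((\<lambda>s. q s x) \<longlongrightarrow> (2 * v k * g x * ch x + (v k)^2 * 0 * (ch x)^2) * p x) (at_right 0)"
      using tendsto_cong[OF E] by simp
    then show ?thesis by (simp add: algebra_simps)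
  qed
  have limL: "((\<lambda>s. integral {a..b} (q s)) \<longlongrightarrow> integral {a..b} (\<lambda>x. 2 * v k * (g x * p x * ch x))) (at_right 0)"
  proof (rule tendsto_at_right_sequentially[of 0 1])
    fix S :: "nat \<Rightarrow> real" assume S: "\<And>n. 0 < S n" "\<And>n. S n < 1" "decseq S" "S \<longlonglongrightarrow> 0"
    have Sf: "filterlim S (at_right 0) sequentially"
    proof -
      have "\<forall>n. S n \<in> {0<..} \<and> S n \<noteq> 0" using S(1) by (metis greaterThan_iff less_irrefl)
      then show ?thesis unfolding filterlim_at using S(4) by (auto intro: always_eventually)
    qed
    show "(\<lambda>n. integral {a..b} (q (S n))) \<longlonglongrightarrow> integral {a..b} (\<lambda>x. 2 * v k * (g x * p x * ch x))"
    proof (rule dominated_convergence(2))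
      show "q (S n) integrable_on {a..b}" for n
      proof -
        have "continuous_on UNIV (q (S n))" unfolding q_def by (intro continuous_intros cg cD cp)
        then show ?thesis by (rule integrable_continuous_interval[OF continuous_on_subset[OF _ subset_UNIV]])
      qed
      show "(\<lambda>x. (2 * \<bar>v k\<bar> * \<bar>g x\<bar> + (v k)^2) * p x) integrable_on {a..b}"
      proof -
        have "continuous_on UNIV (\<lambda>x. (2 * \<bar>v k\<bar> * \<bar>g x\<bar> + (v k)^2) * p x)" by (intro continuous_intros cg cp)
        then show ?thesis by (rule integrable_continuous_interval[OF continuous_on_subset[OF _ subset_UNIV]])
      qed
      show "norm (q (S n) x) \<le> (2 * \<bar>v k\<bar> * \<bar>g x\<bar> + (v k)^2) * p x" for n x
      proof -
        define s where "s = S n"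
        define D where "D = \<Delta> s x"
        have s0: "s > 0" using S(1) unfolding s_def by simp
        have D1: "\<bar>D\<bar> \<le> s" using clip_lip[of "w k * x + \<theta> k" s] s0 unfolding D_def \<Delta>_def by (simp add: add.assoc)
        have D1': "\<bar>D\<bar> \<le> 1" using clip_diff1 unfolding D_def \<Delta>_def by blast
        have D2: "D^2 \<le> s"
        proof -
          have "\<bar>D\<bar> * \<bar>D\<bar> \<le> s * 1" by (rule mult_mono) (use D1 D1' s0 in auto)
          then show ?thesis by (simp add: power2_eq_square abs_mult_self)
        qed
        have "\<bar>2 * v k * g x * D + (v k)^2 * D^2\<bar> \<le> \<bar>2 * v k * g x * D\<bar> + \<bar>(v k)^2 * D^2\<bar>"
          by (rule abs_triangle_ineq)
        also have "\<dots> = 2 * \<bar>v k\<bar> * \<bar>g x\<bar> * \<bar>D\<bar> + (v k)^2 * D^2" by (simp add: abs_mult)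
        also have "\<dots> \<le> 2 * \<bar>v k\<bar> * \<bar>g x\<bar> * s + (v k)^2 * s"
          by (intro add_mono mult_left_mono D1 D2) auto
        finally have A: "\<bar>2 * v k * g x * D + (v k)^2 * D^2\<bar> \<le> (2 * \<bar>v k\<bar> * \<bar>g x\<bar> + (v k)^2) * s"
          by (simp add: algebra_simps)
        have "norm (q (S n) x) = (1 / s) * (\<bar>2 * v k * g x * D + (v k)^2 * D^2\<bar> * p x)"
          unfolding q_def s_def[symmetric] D_def[symmetric] using s0 p0 by (simp add: abs_mult)
        also have "\<dots> \<le> (1 / s) * ((2 * \<bar>v k\<bar> * \<bar>g x\<bar> + (v k)^2) * s * p x)"
          by (intro mult_left_mono mult_right_mono A) (use s0 p0 in auto)
        also have "\<dots> = (2 * \<bar>v k\<bar> * \<bar>g x\<bar> + (v k)^2) * p x" using s0 by simp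
        finally show ?thesis .
      qed
      show "(\<lambda>n. q (S n) x) \<longlonglongrightarrow> 2 * v k * (g x * p x * ch x)" for x
        by (rule filterlim_compose[OF ptw Sf])
    qed
  qed simp
  have "integral {a..b} (\<lambda>x. 2 * v k * (g x * p x * ch x)) = 0"
    using tendsto_unique[OF _ limL lim0] by simp
  then show ?thesis unfolding g_def ch_def .
qed

lemma half:
  fixes a b :: real and h :: nat and v w \<theta> :: "nat \<Rightarrow> real"
    and f p :: "real \<Rightarrow> real" and i j :: nat
  assumes "a < b"
    and vw: "\<forall>k \<in> {1..h}. v k > 0 \<and> w k > 0"
    and cf: "continuous_on UNIV f" and cp: "continuous_on UNIV p"
    and p0: "\<forall>x. p x \<ge> 0"
    and pp: "{x. p x > 0} = {a<..<b}"
    and L: "Lip f a b < ereal (Min ((\<lambda>k. v k * w k) ` {1..h}))"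
    and gz: "grad_zero h (Loss a b h v w f p) \<theta>"
    and ij: "i \<in> {1..h}" "j \<in> {1..h}"
    and o: "max a (psi w \<theta> i) < max a (psi w \<theta> j)"
           "max a (psi w \<theta> j) < min b (psi w \<theta> i + 1 / w i)"
           "min b (psi w \<theta> i + 1 / w i) < min b (psi w \<theta> j + 1 / w j)"
  shows False
proof -
  define l where "l k = max a (psi w \<theta> k)" for k
  define r where "r k = min b (psi w \<theta> k + 1 / w k)" for k
  define g where "g x = NN h v w \<theta> x - f x" for x
  have cg: "continuous_on UNIV g" unfolding g_def[abs_def] by (intro continuous_intros NN_cont cf)
  have o': "l i < l j" "l j < r i" "r i < r j" using o unfolding l_def r_def by auto
  have zero: "integral {l k..r k} (\<lambda>x. g x * p x) = 0" if k: "k \<in> {1..h}" "l k < r k" for k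
  proof -
    have wk: "w k > 0" "v k > 0" using vw k by auto
    have "k \<in> {1..h+1}" using k by auto
    then have d: "((\<lambda>t. Loss a b h v w f p (\<theta>(k := t))) has_real_derivative 0) (at (\<theta> k))"
      using gz unfolding grad_zero_def by blast
    have "integral {a..b} (\<lambda>x. 2 * v k * ((NN h v w \<theta> x - f x) * p x * (if 0 \<le> w k * x + \<theta> k \<and> w k * x + \<theta> k < 1 then 1 else 0))) = 0"
      by (rule partial_zero[OF k(1) \<open>a < b\<close> cf cp p0 d])
    then have "integral {a..b} (\<lambda>x. (g x * p x) * (if 0 \<le> w k * x + \<theta> k \<and> w k * x + \<theta> k < 1 then 1 else 0)) = 0"
      using wk unfolding integral_mult_left g_def by simp
    moreover have "continuous_on UNIV (\<lambda>x. g x * p x)" by (intro continuous_intros cg cp)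
    ultimately show ?thesis
      using restrict_int[where w=w and k=k and a=a and b=b and \<theta>=\<theta> and G="\<lambda>x. g x * p x", OF wk(1)] k(2) unfolding l_def r_def by simp
  qed
  have Ii: "integral {l i..r i} (\<lambda>x. g x * p x) = 0" using zero[OF ij(1)] o' by simp
  have Ij: "integral {l j..r j} (\<lambda>x. g x * p x) = 0" using zero[OF ij(2)] o' by simp
  have incr: "g x < g y" if k: "k \<in> {1..h}" and xy: "l k \<le> x" "x < y" "y \<le> r k" for k x y
    unfolding g_def
    by (rule NN_incr[OF k vw L xy(2)]) (use xy in \<open>auto simp: l_def r_def\<close>)
  have mono: "\<forall>x y. l i \<le> x \<longrightarrow> x < y \<longrightarrow> y \<le> r j \<longrightarrow> g x < g y"
  proof (intro allI impI)
    fix x y assume xy: "l i \<le> x" "x < y" "y \<le> r j"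
    show "g x < g y"
    proof (cases "y \<le> r i")
      case True then show ?thesis using incr[OF ij(1)] xy by auto
    next
      case False
      show ?thesis
      proof (cases "l j \<le> x")
        case True then show ?thesis using incr[OF ij(2)] xy by auto
      next
        case F2: False
        have "g x < g (r i)" using incr[OF ij(1), of x "r i"] xy o' F2 by auto
        also have "g (r i) < g y" using incr[OF ij(2), of "r i" y] xy o' False by auto
        finally show ?thesis .
      qed
    qed
  qed
  have ppos: "\<forall>x\<in>{l i<..<r j}. p x > 0"
  proof
    fix x assume "x \<in> {l i<..<r j}"
    then have "x \<in> {a<..<b}" unfolding l_def r_def by auto
    then show "p x > 0" using pp by blast
  qed
  show False by (rule core[OF o' cg cp p0 ppos mono Ii Ij])
qed

theorem lemma2p5:
  fixes a b :: real and h :: nat and v w \<theta> :: "nat \<Rightarrow> real"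
    and f p :: "real \<Rightarrow> real" and i j :: nat
  assumes "a < b"
    and "\<forall>k \<in> {1..h}. v k > 0 \<and> w k > 0"
    and "continuous_on UNIV f" and "continuous_on UNIV p"
    and "\<forall>x. p x \<ge> 0"
    and "{x. p x > 0} = {a<..<b}"
    and "Lip f a b < ereal (Min ((\<lambda>k. v k * w k) ` {1..h}))"
    and "grad_zero h (Loss a b h v w f p) \<theta>"
    and "i \<in> {1..h}" and "j \<in> {1..h}"
    and "Ival a b w \<theta> i \<inter> Ival a b w \<theta> j \<noteq> {}"
  shows "Ival a b w \<theta> i \<subseteq> Ival a b w \<theta> j \<or> Ival a b w \<theta> j \<subseteq> Ival a b w \<theta> i"
proof (rule ccontr)
  assume nn: "\<not> ?thesis"
  define li where "li = max a (psi w \<theta> i)"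
  define ri where "ri = min b (psi w \<theta> i + 1 / w i)"
  define lj where "lj = max a (psi w \<theta> j)"
  define rj where "rj = min b (psi w \<theta> j + 1 / w j)"
  have Ei: "Ival a b w \<theta> i = {li<..<ri}" and Ej: "Ival a b w \<theta> j = {lj<..<rj}"
    unfolding li_def ri_def lj_def rj_def by (rule Ival_eq)+
  have m: "max li lj < min ri rj" using assms(11) unfolding Ei Ej by auto
  obtain x where x: "li < x" "x < ri" "lj < x" "x < rj"
  proof
    show "li < (max li lj + min ri rj) / 2" "(max li lj + min ri rj) / 2 < ri"
         "lj < (max li lj + min ri rj) / 2" "(max li lj + min ri rj) / 2 < rj" using m by auto
  qed
  have c: "(li < lj \<or> rj < ri) \<and> (lj < li \<or> ri < rj)"
    using nn x unfolding Ei Ej by (auto simp: subset_eq)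
  show False
  proof (cases "li < lj")
    case True
    then have "ri < rj" using c by auto
    then show False
      using half[OF assms(1-10), folded li_def ri_def lj_def rj_def] True x by linarith
  next
    case False
    then have "lj < li" "rj < ri" using c by auto
    then show False
      using half[OF assms(1-8) assms(10) assms(9), folded li_def ri_def lj_def rj_def] x by linarith
  qed
qed

end
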